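(* Let $G=(V,E)$ be a finite graph with a Bernoulli bond percolation on it, and let $a,b,c\in V$. If $\mathbb{P}(ab\|c)=0$, then $$\mathbb{P}(a\|b\|c)\,\mathbb{P}(abc)=\mathbb{P}(ac\|b)\,\mathbb{P}(a\|bc)\quad\text{and}\quad \mathbb{P}(abc)=\mathbb{P}(ac)\,\mathbb{P}(bc).$$
   Context: A Bernoulli bond percolation on $G$ declares each edge $e\in E$ open independently with its own probability $p_e\in[0,1]$; clusters are connected components of the subgraph of open edges. Notation: $\mathbb{P}(abc)$ is the probability that $a,b,c$ lie in one cluster; $\mathbb{P}(a\|b\|c)$ that they lie in three pairwise different clusters; $\mathbb{P}(ab\|c)$ that $a,b$ lie in the same cluster and $c$ lies in a different cluster (similarly $\mathbb{P}(ac\|b)$ and $\mathbb{P}(a\|bc)$); $\mathbb{P}(ac)$ is the probability that $a$ and $c$ lie in the same cluster (similarly $\mathbb{P}(bc)$). *)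

theory Defs
  imports Main "HOL-Analysis.Analysis"
begin

text \<open>A finite (multi)graph is given by a finite vertex set V, a finite edge set E
  and an endpoint map ends : E -> V x V (edges are undirected).
  A percolation configuration is the set S \<subseteq> E of open edges.\<close>

definition open_rel :: "('e \<Rightarrow> 'v \<times> 'v) \<Rightarrow> 'e set \<Rightarrow> ('v \<times> 'v) set" where
  "open_rel ends S = (\<Union>e\<in>S. {ends e, prod.swap (ends e)})"

definition conn :: "('e \<Rightarrow> 'v \<times> 'v) \<Rightarrow> 'e set \<Rightarrow> 'v \<Rightarrow> 'v \<Rightarrow> bool" where
  "conn ends S u v \<longleftrightarrow> (u, v) \<in> (open_rel ends S)\<^sup>*"

definition config_weight :: "'e set \<Rightarrow> ('e \<Rightarrow> real) \<Rightarrow> 'e set \<Rightarrow> real" where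
  "config_weight E p S = (\<Prod>e\<in>S. p e) * (\<Prod>e\<in>E - S. 1 - p e)"

definition perc_prob :: "'e set \<Rightarrow> ('e \<Rightarrow> real) \<Rightarrow> ('e set \<Rightarrow> bool) \<Rightarrow> real" where
  "perc_prob E p A = (\<Sum>S\<in>Pow E. if A S then config_weight E p S else 0)"

end

theory Submission
  imports Defs
begin

lemma total_one: "finite F \<Longrightarrow> perc_prob F p (\<lambda>_. True) = 1"
  unfolding perc_prob_def config_weight_def
  using prod_add[of F p "\<lambda>e. 1 - p e"] by simp

lemma weight_split:
  assumes "E1 \<subseteq> E" "finite E" "S1 \<subseteq> E1" "S2 \<subseteq> E - E1"
  shows "config_weight E p (S1 \<union> S2) = config_weight E1 p S1 * config_weight (E - E1) p S2"
proof -
  have f: "finite E1" "finite (E - E1)" using assms finite_subset by auto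
  have d: "E - (S1 \<union> S2) = (E1 - S1) \<union> ((E - E1) - S2)" using assms by auto
  have "(\<Prod>e\<in>S1 \<union> S2. p e) = (\<Prod>e\<in>S1. p e) * (\<Prod>e\<in>S2. p e)"
    by (rule prod.union_disjoint) (use assms f in \<open>auto intro: finite_subset\<close>)
  moreover have "(\<Prod>e\<in>E - (S1 \<union> S2). 1 - p e) = (\<Prod>e\<in>E1 - S1. 1 - p e) * (\<Prod>e\<in>(E - E1) - S2. 1 - p e)"
    unfolding d by (rule prod.union_disjoint) (use assms f in auto)
  ultimately show ?thesis unfolding config_weight_def by (simp add: ac_simps)
qed

lemma indep:
  assumes "E1 \<subseteq> E" "finite E"
  shows "perc_prob E p (\<lambda>S. X (S \<inter> E1) \<and> Y (S - E1)) = perc_prob E1 p X * perc_prob (E - E1) p Y"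
proof -
  have f: "finite E1" "finite (E - E1)" using assms finite_subset by auto
  have inj: "inj_on (\<lambda>(S1, S2). S1 \<union> S2) (Pow E1 \<times> Pow (E - E1))"
    by (auto simp: inj_on_def)
  have img: "(\<lambda>(S1, S2). S1 \<union> S2) ` (Pow E1 \<times> Pow (E - E1)) = Pow E"
  proof (rule set_eqI, rule iffI)
    fix S assume "S \<in> Pow E"
    then show "S \<in> (\<lambda>(S1, S2). S1 \<union> S2) ` (Pow E1 \<times> Pow (E - E1))"
      by (intro image_eqI[of _ _ "(S \<inter> E1, S - E1)"]) auto
  qed (use assms in auto)
  have "perc_prob E p (\<lambda>S. X (S \<inter> E1) \<and> Y (S - E1))
      = (\<Sum>(S1, S2)\<in>Pow E1 \<times> Pow (E - E1). if X ((S1 \<union> S2) \<inter> E1) \<and> Y ((S1 \<union> S2) - E1) then config_weight E p (S1 \<union> S2) else 0)"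
    unfolding perc_prob_def img[symmetric] by (subst sum.reindex[OF inj]) (simp add: case_prod_unfold)
  also have "\<dots> = (\<Sum>(S1, S2)\<in>Pow E1 \<times> Pow (E - E1). (if X S1 then config_weight E1 p S1 else 0) * (if Y S2 then config_weight (E - E1) p S2 else 0))"
  proof (rule sum.cong[OF refl])
    fix x assume "x \<in> Pow E1 \<times> Pow (E - E1)"
    then obtain S1 S2 where x: "x = (S1, S2)" and h: "S1 \<subseteq> E1" "S2 \<subseteq> E - E1" by auto
    from h have e1: "(S1 \<union> S2) \<inter> E1 = S1" and e2: "S1 \<union> S2 - E1 = S2" by auto
    show "(case x of (S1, S2) \<Rightarrow> if X ((S1 \<union> S2) \<inter> E1) \<and> Y (S1 \<union> S2 - E1) then config_weight E p (S1 \<union> S2) else 0) =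
       (case x of (S1, S2) \<Rightarrow> (if X S1 then config_weight E1 p S1 else 0) * (if Y S2 then config_weight (E - E1) p S2 else 0))"
      unfolding x prod.case e1 e2 using weight_split[OF assms, of S1 S2 p] h by auto
  qed
  also have "\<dots> = perc_prob E1 p X * perc_prob (E - E1) p Y"
    unfolding perc_prob_def sum_product sum.cartesian_product by simp
  finally show ?thesis .
qed

lemma open_rel_iff: "(u, v) \<in> open_rel ends S \<longleftrightarrow> (\<exists>e\<in>S. ends e = (u, v) \<or> ends e = (v, u))"
  unfolding open_rel_def by (auto simp: prod.swap_def) (metis fst_conv snd_conv prod.collapse)+

lemma open_rel_mono: "S \<subseteq> T \<Longrightarrow> open_rel ends S \<subseteq> open_rel ends T"
  unfolding open_rel_def by auto

lemma conn_mono: "S \<subseteq> T \<Longrightarrow> conn ends S u v \<Longrightarrow> conn ends T u v"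
  unfolding conn_def using rtrancl_mono[OF open_rel_mono] by blast

lemma open_rel_sym: "(u, v) \<in> open_rel ends S \<Longrightarrow> (v, u) \<in> open_rel ends S"
  by (auto simp: open_rel_iff)

lemma conn_sym: "conn ends S u v \<Longrightarrow> conn ends S v u"
  unfolding conn_def
proof (induction rule: rtrancl_induct)
  case (step y z)
  then show ?case using open_rel_sym by (meson converse_rtrancl_into_rtrancl)
qed simp

lemma conn_trans: "conn ends S u v \<Longrightarrow> conn ends S v w \<Longrightarrow> conn ends S u w"
  unfolding conn_def by (rule rtrancl_trans)

lemma conn_refl: "conn ends S u u"
  unfolding conn_def by simp

lemma perc_prob_cong:
  assumes "\<And>S. S \<subseteq> E \<Longrightarrow> config_weight E p S \<noteq> 0 \<Longrightarrow> P S \<longleftrightarrow> Q S"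
  shows "perc_prob E p P = perc_prob E p Q"
  unfolding perc_prob_def by (rule sum.cong) (use assms in auto)


lemma decomp:
  fixes V :: "'v set" and E :: "'e set" and ends :: "'e \<Rightarrow> 'v \<times> 'v"
    and p :: "'e \<Rightarrow> real" and a b c :: 'v
  assumes finE: "finite E"
    and hyp: "\<And>S. S \<subseteq> E \<Longrightarrow> config_weight E p S \<noteq> 0 \<Longrightarrow> conn ends S a b \<Longrightarrow> conn ends S a c"
  shows "\<exists>E1 X Y. E1 \<subseteq> E \<and> (\<forall>S. S \<subseteq> E \<and> config_weight E p S \<noteq> 0 \<longrightarrow>
            (conn ends S a c \<longleftrightarrow> X (S \<inter> E1)) \<and> (conn ends S b c \<longleftrightarrow> Y (S - E1)))"
proof -
  define F1 where "F1 = {e\<in>E. p e = 1}"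
  define H where "H = {e\<in>E. p e \<noteq> 0}"
  have good: "F1 \<subseteq> S \<and> S \<subseteq> H" if "S \<subseteq> E" "config_weight E p S \<noteq> 0" for S
  proof -
    have f: "finite S" "finite (E - S)" using that finE finite_subset by auto
    from that(2) have "(\<Prod>e\<in>S. p e) \<noteq> 0" "(\<Prod>e\<in>E - S. 1 - p e) \<noteq> 0"
      unfolding config_weight_def by auto
    then show ?thesis using f that(1) unfolding F1_def H_def by auto
  qed
  define C where "C = {v. conn ends F1 v c}"
  show ?thesis
  proof (cases "a \<in> C")
    case True
    show ?thesis
    proof (intro exI conjI allI impI)
      fix S assume S: "S \<subseteq> E \<and> config_weight E p S \<noteq> 0"
      show "conn ends S a c \<longleftrightarrow> (\<lambda>_. True) (S \<inter> {})"
        using True good[of S] S conn_mono[of F1 S ends a c] unfolding C_def by auto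
      show "conn ends S b c \<longleftrightarrow> (\<lambda>T. conn ends T b c) (S - {})" by simp
    qed simp
  next
    case aC: False
    define RA where "RA = {(u, v). (u, v) \<in> open_rel ends H \<and> u \<notin> C \<and> v \<notin> C}"
    define A where "A = {v. (a, v) \<in> RA\<^sup>*}"
    define EA where "EA = {e\<in>E. fst (ends e) \<in> A \<or> snd (ends e) \<in> A}"
    have AC: "v \<notin> C" if "v \<in> A" for v
    proof -
      have "(a, v) \<in> RA\<^sup>*" using that unfolding A_def by simp
      then show ?thesis
        by (induction rule: rtrancl_induct) (use aC in \<open>auto simp: RA_def\<close>)
    qed
    have Aclosed: "w \<in> A" if "v \<in> A" "(v, w) \<in> RA" for v w
      using that unfolding A_def by (auto intro: rtrancl_into_rtrancl)
    have cC: "c \<in> C" unfolding C_def by (simp add: conn_refl)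
    have Cstep: "v \<in> C" if "w \<in> C" "(v, w) \<in> open_rel ends F1" for v w
      using that unfolding C_def conn_def by (auto intro: converse_rtrancl_into_rtrancl)
    have bA: "b \<notin> A"
    proof
      assume bA: "b \<in> A"
      define S0 where "S0 = F1 \<union> {e\<in>H. fst (ends e) \<notin> C \<and> snd (ends e) \<notin> C}"
      have S0E: "S0 \<subseteq> E" unfolding S0_def F1_def H_def by auto
      have f: "finite S0" "finite (E - S0)" using S0E finE finite_subset by auto
      have "(\<Prod>e\<in>S0. p e) \<noteq> 0" using f unfolding S0_def F1_def H_def by auto
      moreover have "(\<Prod>e\<in>E - S0. 1 - p e) \<noteq> 0" using f unfolding S0_def F1_def H_def by auto
      ultimately have w: "config_weight E p S0 \<noteq> 0" unfolding config_weight_def by simp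
      have "RA \<subseteq> open_rel ends S0"
      proof
        fix x assume "x \<in> RA"
        then obtain u v where x: "x = (u, v)" and uv: "(u, v) \<in> open_rel ends H" "u \<notin> C" "v \<notin> C"
          unfolding RA_def by auto
        then obtain e where "e \<in> H" "ends e = (u, v) \<or> ends e = (v, u)" by (auto simp: open_rel_iff)
        then show "x \<in> open_rel ends S0" unfolding x open_rel_iff S0_def using uv by fastforce
      qed
      then have ab: "conn ends S0 a b" using bA unfolding A_def conn_def
        using rtrancl_mono by blast
      have nC: "v \<notin> C" if "(a, v) \<in> (open_rel ends S0)\<^sup>*" for v
        using that
      proof (induction rule: rtrancl_induct)
        case base then show ?case using aC .
      next
        case (step v w)
        then obtain e where e: "e \<in> S0" "ends e = (v, w) \<or> ends e = (w, v)" by (auto simp: open_rel_iff)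
        show ?case
        proof (cases "e \<in> F1")
          case True
          then have "(v, w) \<in> open_rel ends F1" using e by (auto simp: open_rel_iff)
          then show ?thesis using Cstep step by blast
        next
          case False
          then show ?thesis using e unfolding S0_def by auto
        qed
      qed
      have "\<not> conn ends S0 a c" using nC cC unfolding conn_def by blast
      then show False using hyp[OF S0E w ab] by simp
    qed
    show ?thesis
    proof (intro exI conjI allI impI)
      show "EA \<subseteq> E" unfolding EA_def by auto
      fix S assume S: "S \<subseteq> E \<and> config_weight E p S \<noteq> 0"
      then have F1S: "F1 \<subseteq> S" and SH: "S \<subseteq> H" using good by auto
      show "conn ends S a c \<longleftrightarrow> (\<lambda>T. conn ends (T \<union> F1) a c) (S \<inter> EA)"
      proof
        assume "(\<lambda>T. conn ends (T \<union> F1) a c) (S \<inter> EA)"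
        then show "conn ends S a c" using F1S conn_mono[of "S \<inter> EA \<union> F1" S ends a c] by auto
      next
        let ?T = "S \<inter> EA \<union> F1"
        assume "conn ends S a c"
        then have "(a, c) \<in> (open_rel ends S)\<^sup>*" unfolding conn_def .
        then have "(v \<in> A \<and> conn ends ?T a v) \<or> conn ends ?T a c" if "v = c" for v
        proof -
          have "(a, v) \<in> (open_rel ends S)\<^sup>* \<Longrightarrow> (v \<in> A \<and> conn ends ?T a v) \<or> conn ends ?T a c" for v
          proof (induction rule: rtrancl_induct)
            case base
            then show ?case unfolding A_def by (simp add: conn_refl)
          next
            case (step v w)
            show ?case
            proof (cases "conn ends ?T a c")
              case False
              with step.IH have vA: "v \<in> A" and av: "conn ends ?T a v" by auto
              from step.hyps(2) obtain e where e: "e \<in> S" "ends e = (v, w) \<or> ends e = (w, v)"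
                by (auto simp: open_rel_iff)
              have "e \<in> EA" using e vA S unfolding EA_def by auto
              then have "(v, w) \<in> open_rel ends ?T" using e by (auto simp: open_rel_iff)
              then have aw: "conn ends ?T a w" using av unfolding conn_def by auto
              show ?thesis
              proof (cases "w \<in> C")
                case True
                then have "conn ends ?T w c" unfolding C_def using conn_mono[of F1 ?T ends w c] by auto
                then show ?thesis using conn_trans[OF aw] by blast
              next
                case False
                have "(v, w) \<in> open_rel ends H" using e SH by (auto simp: open_rel_iff)
                then have "(v, w) \<in> RA" unfolding RA_def using False AC[OF vA] by auto
                then show ?thesis using Aclosed vA aw by blast
              qed
            qed simp
          qed
          then show ?thesis using \<open>(a, c) \<in> (open_rel ends S)\<^sup>*\<close> that by blast
        qed
        then show "(\<lambda>T. conn ends (T \<union> F1) a c) (S \<inter> EA)" by auto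
      qed
      show "conn ends S b c \<longleftrightarrow> (\<lambda>T. conn ends (T \<union> F1) b c) (S - EA)"
      proof
        assume "(\<lambda>T. conn ends (T \<union> F1) b c) (S - EA)"
        then show "conn ends S b c" using F1S conn_mono[of "S - EA \<union> F1" S ends b c] by auto
      next
        let ?T = "S - EA \<union> F1"
        assume "conn ends S b c"
        then have bc: "(b, c) \<in> (open_rel ends S)\<^sup>*" unfolding conn_def .
        have "(b, v) \<in> (open_rel ends S)\<^sup>* \<Longrightarrow> (v \<notin> A \<and> conn ends ?T b v) \<or> conn ends ?T b c" for v
        proof (induction rule: rtrancl_induct)
          case base
          then show ?case using bA by (simp add: conn_refl)
        next
          case (step v w)
          show ?case
          proof (cases "conn ends ?T b c")
            case False
            with step.IH have vA: "v \<notin> A" and bv: "conn ends ?T b v" by auto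
            from step.hyps(2) obtain e where e: "e \<in> S" "ends e = (v, w) \<or> ends e = (w, v)"
              by (auto simp: open_rel_iff)
            show ?thesis
            proof (cases "v \<in> C")
              case True
              then have "conn ends ?T v c" unfolding C_def using conn_mono[of F1 ?T ends v c] by auto
              then show ?thesis using conn_trans[OF bv] by blast
            next
              case vC: False
              have wA: "w \<notin> A"
              proof
                assume wA: "w \<in> A"
                have "(w, v) \<in> open_rel ends H" using e SH by (auto simp: open_rel_iff)
                then have "(w, v) \<in> RA" unfolding RA_def using vC AC[OF wA] by auto
                then show False using Aclosed wA vA by blast
              qed
              have "e \<notin> EA" using e vA wA unfolding EA_def by auto
              then have "(v, w) \<in> open_rel ends ?T" using e by (auto simp: open_rel_iff)
              then have "conn ends ?T b w" using bv unfolding conn_def by auto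
              then show ?thesis using wA by blast
            qed
          qed simp
        qed
        from this[OF bc] show "(\<lambda>T. conn ends (T \<union> F1) b c) (S - EA)" by auto
      qed
    qed
  qed
qed


theorem mainTheorem7:
  fixes V :: "'v set" and E :: "'e set" and ends :: "'e \<Rightarrow> 'v \<times> 'v"
    and p :: "'e \<Rightarrow> real" and a b c :: 'v
  assumes "finite V" and "finite E"
    and "\<And>e. e \<in> E \<Longrightarrow> fst (ends e) \<in> V \<and> snd (ends e) \<in> V"
    and "\<And>e. e \<in> E \<Longrightarrow> 0 \<le> p e \<and> p e \<le> 1"
    and "a \<in> V" and "b \<in> V" and "c \<in> V"
    and "perc_prob E p (\<lambda>S. conn ends S a b \<and> \<not> conn ends S a c) = 0"
  shows "perc_prob E p (\<lambda>S. \<not> conn ends S a b \<and> \<not> conn ends S b c \<and> \<not> conn ends S a c)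
           * perc_prob E p (\<lambda>S. conn ends S a b \<and> conn ends S b c)
         = perc_prob E p (\<lambda>S. conn ends S a c \<and> \<not> conn ends S a b)
           * perc_prob E p (\<lambda>S. conn ends S b c \<and> \<not> conn ends S a b)
    \<and> perc_prob E p (\<lambda>S. conn ends S a b \<and> conn ends S b c)
         = perc_prob E p (\<lambda>S. conn ends S a c) * perc_prob E p (\<lambda>S. conn ends S b c)"
proof -
  note finE = assms(2)
  have nonneg: "config_weight E p S \<ge> 0" if "S \<subseteq> E" for S
    unfolding config_weight_def using that assms(4)
    by (intro mult_nonneg_nonneg prod_nonneg) auto
  have hyp: "conn ends S a c" if "S \<subseteq> E" "config_weight E p S \<noteq> 0" "conn ends S a b" for S
  proof (rule ccontr)
    assume nac: "\<not> conn ends S a c"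
    have fin: "finite (Pow E)" using finE by simp
    have "\<forall>T\<in>Pow E. (if conn ends T a b \<and> \<not> conn ends T a c then config_weight E p T else 0) = 0"
      using assms(8) unfolding perc_prob_def
      by (subst (asm) sum_nonneg_eq_0_iff[OF fin]) (use nonneg in auto)
    from bspec[OF this, of S] that nac show False by auto
  qed
  obtain E1 X Y where E1: "E1 \<subseteq> E" and XY0: "\<forall>S. S \<subseteq> E \<and> config_weight E p S \<noteq> 0 \<longrightarrow>
            (conn ends S a c \<longleftrightarrow> X (S \<inter> E1)) \<and> (conn ends S b c \<longleftrightarrow> Y (S - E1))"
  proof -
    have "\<exists>E1 X Y. E1 \<subseteq> E \<and> (\<forall>S. S \<subseteq> E \<and> config_weight E p S \<noteq> 0 \<longrightarrow>
            (conn ends S a c \<longleftrightarrow> X (S \<inter> E1)) \<and> (conn ends S b c \<longleftrightarrow> Y (S - E1)))"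
    proof (rule decomp[OF finE])
      fix S assume "S \<subseteq> E" "config_weight E p S \<noteq> 0" "conn ends S a b"
      then show "conn ends S a c" by (rule hyp)
    qed
    then show ?thesis using that by (elim exE conjE)
  qed
  have XY: "(conn ends S a c \<longleftrightarrow> X (S \<inter> E1)) \<and> (conn ends S b c \<longleftrightarrow> Y (S - E1))"
    if "S \<subseteq> E" "config_weight E p S \<noteq> 0" for S
    using XY0 that by blast
  have symm: "conn ends S a b \<longleftrightarrow> conn ends S a c \<and> conn ends S b c"
    if "S \<subseteq> E" "config_weight E p S \<noteq> 0" for S
  proof
    assume ab: "conn ends S a b"
    have ac: "conn ends S a c" using hyp[OF that ab] .
    show "conn ends S a c \<and> conn ends S b c" using ac conn_trans[OF conn_sym[OF ab] ac] by blast
  next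
    assume "conn ends S a c \<and> conn ends S b c"
    then show "conn ends S a b" using conn_trans[of ends S a c b] conn_sym[of ends S b c] by blast
  qed
  let ?P = "perc_prob E p"
  define x where "x = perc_prob E1 p X"
  define nx where "nx = perc_prob E1 p (\<lambda>T. \<not> X T)"
  define y where "y = perc_prob (E - E1) p Y"
  define ny where "ny = perc_prob (E - E1) p (\<lambda>T. \<not> Y T)"
  have t1: "perc_prob E1 p (\<lambda>_. True) = 1" "perc_prob (E - E1) p (\<lambda>_. True) = 1"
    using finE E1 by (auto intro: total_one finite_subset)
  have e1: "?P (\<lambda>S. \<not> conn ends S a b \<and> \<not> conn ends S b c \<and> \<not> conn ends S a c) = nx * ny"
  proof -
    have "?P (\<lambda>S. \<not> conn ends S a b \<and> \<not> conn ends S b c \<and> \<not> conn ends S a c)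
        = ?P (\<lambda>S. (\<lambda>T. \<not> X T) (S \<inter> E1) \<and> (\<lambda>T. \<not> Y T) (S - E1))"
      apply (rule perc_prob_cong) subgoal for S using XY[of S] symm[of S] by auto done
    then show ?thesis unfolding nx_def ny_def using indep[OF E1 finE] by simp
  qed
  have e2: "?P (\<lambda>S. conn ends S a b \<and> conn ends S b c) = x * y"
  proof -
    have "?P (\<lambda>S. conn ends S a b \<and> conn ends S b c) = ?P (\<lambda>S. X (S \<inter> E1) \<and> Y (S - E1))"
      apply (rule perc_prob_cong) subgoal for S using XY[of S] symm[of S] by auto done
    then show ?thesis unfolding x_def y_def using indep[OF E1 finE] by simp
  qed
  have e3: "?P (\<lambda>S. conn ends S a c \<and> \<not> conn ends S a b) = x * ny"
  proof -
    have "?P (\<lambda>S. conn ends S a c \<and> \<not> conn ends S a b) = ?P (\<lambda>S. X (S \<inter> E1) \<and> (\<lambda>T. \<not> Y T) (S - E1))"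
      apply (rule perc_prob_cong) subgoal for S using XY[of S] symm[of S] by auto done
    then show ?thesis unfolding x_def ny_def using indep[OF E1 finE] by simp
  qed
  have e4: "?P (\<lambda>S. conn ends S b c \<and> \<not> conn ends S a b) = nx * y"
  proof -
    have "?P (\<lambda>S. conn ends S b c \<and> \<not> conn ends S a b) = ?P (\<lambda>S. (\<lambda>T. \<not> X T) (S \<inter> E1) \<and> Y (S - E1))"
      apply (rule perc_prob_cong) subgoal for S using XY[of S] symm[of S] by auto done
    then show ?thesis unfolding nx_def y_def using indep[OF E1 finE] by simp
  qed
  have e5: "?P (\<lambda>S. conn ends S a c) = x"
  proof -
    have "?P (\<lambda>S. conn ends S a c) = ?P (\<lambda>S. X (S \<inter> E1) \<and> (\<lambda>_. True) (S - E1))"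
      apply (rule perc_prob_cong) subgoal for S using XY[of S] by auto done
    then show ?thesis unfolding x_def using indep[OF E1 finE, of p X "\<lambda>_. True"] t1 by simp
  qed
  have e6: "?P (\<lambda>S. conn ends S b c) = y"
  proof -
    have "?P (\<lambda>S. conn ends S b c) = ?P (\<lambda>S. (\<lambda>_. True) (S \<inter> E1) \<and> Y (S - E1))"
      apply (rule perc_prob_cong) subgoal for S using XY[of S] by auto done
    then show ?thesis unfolding y_def using indep[OF E1 finE, of p "\<lambda>_. True" Y] t1 by simp
  qed
  show ?thesis unfolding e1 e2 e3 e4 e5 e6 by simp
qed

end
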